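(* Let $f:\mathbb{R}^2\to\mathbb{R}$ be a smooth Morse function, let $G=\|\nabla f\|$ be its gradient magnitude field, and let $\delta>0$. Let $X$ be a bounded, simply connected, connected component of the $\delta$-sublevel set $G^{-1}(-\infty,\delta]$, regarded as a region of the plane: assume $\|\nabla f\|\le\delta$ on $\overline{X}$, $\|\nabla f\|=\delta$ on the boundary $\mathrm{Bd}(X)$, and $\mathrm{Bd}(X)$ is a Jordan curve. Suppose the degree of $X$ is non-zero. Then there exists a continuous vector field $\widetilde{V}:\overline{X}\to\mathbb{R}^2$ such that: (i) $\widetilde V$ is a $2\delta$-perturbation of $\nabla f|_{\overline{X}}$, i.e. $\sup_{p\in\overline{X}}\|\widetilde V(p)-\nabla f(p)\|\le 2\delta$; (ii) $\widetilde V|_{\mathrm{Bd}(X)}=\nabla f|_{\mathrm{Bd}(X)}$; (iii) $\widetilde V$ has exactly one zero (singularity) in $\overline{X}$.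
   Context: The degree of $X$ is the sum of the Poincaré indices of the zeros of the gradient vector field $\nabla f$ contained in $X$ (the zeros of $\nabla f$ are the critical points of $f$; they are isolated since $f$ is Morse; sources and sinks have index $+1$, saddles have index $-1$). A singularity of a vector field is a point where it vanishes. For vector fields $V,\widetilde V$ on a common domain, $\widetilde V$ is called a $\delta$-perturbation of $V$ if $\sup_p\|V(p)-\widetilde V(p)\|\le\delta$. *)

theory Defs
  imports "HOL-Analysis.Analysis" "HOL-Complex_Analysis.Complex_Analysis"
begin

text \<open>The plane is modelled as \<open>real^2\<close>. Identification with the complex plane
  (used only to express winding numbers).\<close>

definition to_c :: "real^2 \<Rightarrow> complex" where
  "to_c v = Complex (v $ 1) (v $ 2)"

definition from_c :: "complex \<Rightarrow> real^2" where
  "from_c z = vector [Re z, Im z]"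

text \<open>Smooth (C-infinity) functions on the plane: all iterated partial derivatives
  exist everywhere and are continuous.\<close>

definition smooth2 :: "(real^2 \<Rightarrow> real) \<Rightarrow> bool" where
  "smooth2 f \<longleftrightarrow> (\<exists>S. f \<in> S \<and> (\<forall>g\<in>S. continuous_on UNIV g \<and>
      (\<forall>i::2. \<exists>h\<in>S. \<forall>x. ((\<lambda>t. g (x + t *\<^sub>R axis i 1)) has_real_derivative h x) (at 0))))"

definition grad :: "(real^2 \<Rightarrow> real) \<Rightarrow> real^2 \<Rightarrow> real^2" where
  "grad f p = (SOME g. (f has_derivative (\<lambda>v. g \<bullet> v)) (at p))"

definition morse2 :: "(real^2 \<Rightarrow> real) \<Rightarrow> bool" where
  "morse2 f \<longleftrightarrow> smooth2 f \<and>
     (\<forall>p. grad f p = 0 \<longrightarrow> (\<exists>H. (grad f has_derivative H) (at p) \<and> inj H))"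

definition poincare_index :: "(real^2 \<Rightarrow> real^2) \<Rightarrow> real^2 \<Rightarrow> complex" where
  "poincare_index V p = (THE k. eventually
      (\<lambda>r. winding_number (\<lambda>t. to_c (V (from_c (circlepath (to_c p) r t)))) 0 = k)
      (at_right 0))"

definition degree_region :: "(real^2 \<Rightarrow> real) \<Rightarrow> (real^2) set \<Rightarrow> complex" where
  "degree_region f X = (\<Sum>p\<in>{p\<in>X. grad f p = 0}. poincare_index (grad f) p)"

definition jordan_curve :: "(real^2) set \<Rightarrow> bool" where
  "jordan_curve C \<longleftrightarrow> (\<exists>g. simple_path g \<and> pathfinish g = pathstart g \<and> path_image g = C)"

end

theory Submission
  imports Defs
begin

lemma mvt_bound:
  fixes \<phi> \<phi>' :: "real \<Rightarrow> real"
  assumes der: "\<And>t. (\<phi> has_real_derivative \<phi>' t) (at t)"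
    and bd: "\<And>t. \<bar>t\<bar> \<le> \<bar>s\<bar> \<Longrightarrow> \<bar>\<phi>' t - c\<bar> \<le> e"
  shows "\<bar>\<phi> s - \<phi> 0 - c * s\<bar> \<le> e * \<bar>s\<bar>"
proof -
  define \<psi> where "\<psi> t = \<phi> t - c * t" for t
  have d: "DERIV \<psi> t :> \<phi>' t - c" for t
    unfolding \<psi>_def by (auto intro!: derivative_eq_intros der)
  consider "s = 0" | "s > 0" | "s < 0" by linarith
  then show ?thesis
  proof cases
    case 1 then show ?thesis by simp
  next
    case 2
    then obtain z where z: "0 < z" "z < s" "\<psi> s - \<psi> 0 = (s - 0) * (\<phi>' z - c)"
      using MVT2[OF 2 d] by blast
    have "\<bar>\<phi>' z - c\<bar> \<le> e" using bd z by auto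
    then have "\<bar>(s - 0) * (\<phi>' z - c)\<bar> \<le> e * \<bar>s\<bar>" using 2
      by (simp add: abs_mult mult.commute mult_left_mono)
    then show ?thesis using z(3) unfolding \<psi>_def by simp
  next
    case 3
    then obtain z where z: "s < z" "z < 0" "\<psi> 0 - \<psi> s = (0 - s) * (\<phi>' z - c)"
      using MVT2[OF 3 d] by blast
    have "\<bar>\<phi>' z - c\<bar> \<le> e" using bd z by auto
    then have "\<bar>(0 - s) * (\<phi>' z - c)\<bar> \<le> e * \<bar>s\<bar>" using 3
      by (simp add: abs_mult mult.commute mult_left_mono)
    then show ?thesis using z(3) unfolding \<psi>_def by (simp add: abs_minus_commute)
  qed
qed

lemma partial_shift:
  fixes u y :: "'a::real_vector"
  assumes "\<And>x. ((\<lambda>t. f (x + t *\<^sub>R u)) has_real_derivative d x) (at 0)"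
  shows "((\<lambda>t. f (y + t *\<^sub>R u)) has_real_derivative d (y + t0 *\<^sub>R u)) (at t0)"
proof -
  have "((\<lambda>t. f ((y + t0 *\<^sub>R u) + t *\<^sub>R u)) has_real_derivative d (y + t0 *\<^sub>R u)) (at 0)"
    by (rule assms)
  then have "((\<lambda>t. f (y + (t + t0) *\<^sub>R u)) has_real_derivative d (y + t0 *\<^sub>R u)) (at 0)"
  proof -
    have "(\<lambda>t. f (y + (t + t0) *\<^sub>R u)) = (\<lambda>t. f (y + t0 *\<^sub>R u + t *\<^sub>R u))"
      by (rule ext) (simp add: scaleR_add_left add_ac)
    then show ?thesis using \<open>((\<lambda>t. f ((y + t0 *\<^sub>R u) + t *\<^sub>R u)) has_real_derivative d (y + t0 *\<^sub>R u)) (at 0)\<close> by simp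
  qed
  then have "((\<lambda>t. f (y + t *\<^sub>R u)) has_real_derivative d (y + t0 *\<^sub>R u)) (at (0 + t0))"
    using DERIV_shift[where f="\<lambda>t. f (y + t *\<^sub>R u)" and x=0 and z=t0] by simp
  then show ?thesis by simp
qed

lemma norm_axis_real2: "norm (t *\<^sub>R (axis i 1 :: real^2)) = \<bar>t\<bar>"
  by simp

lemma inner_D2: "(p *\<^sub>R axis 1 1 + q *\<^sub>R axis 2 1) \<bullet> (v::real^2) = p * v$1 + q * v$2"
  by (simp add: inner_add_left inner_axis')

lemma partials_has_derivative:
  fixes f :: "real^2 \<Rightarrow> real"
  assumes c1: "continuous_on UNIV d1" and c2: "continuous_on UNIV d2"
   and p1: "\<And>x. ((\<lambda>t. f (x + t *\<^sub>R axis 1 1)) has_real_derivative d1 x) (at 0)"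
   and p2: "\<And>x. ((\<lambda>t. f (x + t *\<^sub>R axis 2 1)) has_real_derivative d2 x) (at 0)"
  shows "(f has_derivative (\<lambda>v. (d1 x *\<^sub>R axis 1 1 + d2 x *\<^sub>R axis 2 1) \<bullet> v)) (at x)"
  unfolding has_derivative_at_alt
proof (intro conjI allI impI)
  show "bounded_linear (\<lambda>v. (d1 x *\<^sub>R axis 1 1 + d2 x *\<^sub>R axis 2 1) \<bullet> v)"
    by (rule bounded_linear_inner_right)
  fix e :: real assume e: "e > 0"
  obtain \<delta>1 where \<delta>1: "\<delta>1 > 0" "\<And>z. dist z x < \<delta>1 \<Longrightarrow> dist (d1 z) (d1 x) < e/2"
    using c1 e unfolding continuous_on_iff by (metis UNIV_I half_gt_zero)
  obtain \<delta>2 where \<delta>2: "\<delta>2 > 0" "\<And>z. dist z x < \<delta>2 \<Longrightarrow> dist (d2 z) (d2 x) < e/2"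
    using c2 e unfolding continuous_on_iff by (metis UNIV_I half_gt_zero)
  show "\<exists>d>0. \<forall>y. norm (y - x) < d \<longrightarrow>
      norm (f y - f x - (d1 x *\<^sub>R axis 1 1 + d2 x *\<^sub>R axis 2 1) \<bullet> (y - x)) \<le> e * norm (y - x)"
  proof (intro exI[of _ "min \<delta>1 \<delta>2 / 2"] conjI allI impI)
    show "min \<delta>1 \<delta>2 / 2 > 0" using \<delta>1 \<delta>2 by simp
    fix y assume y: "norm (y - x) < min \<delta>1 \<delta>2 / 2"
    define a where "a = (y - x)$1"
    define b where "b = (y - x)$2"
    have na: "\<bar>a\<bar> \<le> norm (y - x)" unfolding a_def by (rule component_le_norm_cart)
    have nb: "\<bar>b\<bar> \<le> norm (y - x)" unfolding b_def by (rule component_le_norm_cart)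
    have yeq: "y = (x + b *\<^sub>R axis 2 1) + a *\<^sub>R axis 1 1"
      unfolding a_def b_def by (simp add: vec_eq_iff forall_2 axis_def)
    have T1: "\<bar>f ((x + b *\<^sub>R axis 2 1) + a *\<^sub>R axis 1 1) - f ((x + b *\<^sub>R axis 2 1) + 0 *\<^sub>R axis 1 1) - d1 x * a\<bar> \<le> e/2 * \<bar>a\<bar>"
    proof (rule mvt_bound[where \<phi>'="\<lambda>t. d1 ((x + b *\<^sub>R axis 2 1) + t *\<^sub>R axis 1 1)"])
      show "((\<lambda>t. f (x + b *\<^sub>R axis 2 1 + t *\<^sub>R axis 1 1)) has_real_derivative d1 (x + b *\<^sub>R axis 2 1 + t *\<^sub>R axis 1 1)) (at t)" for t
        by (rule partial_shift[OF p1])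
      fix t assume t: "\<bar>t\<bar> \<le> \<bar>a\<bar>"
      have "dist (x + b *\<^sub>R axis 2 1 + t *\<^sub>R axis 1 1) x \<le> \<bar>b\<bar> + \<bar>t\<bar>"
        unfolding dist_norm using norm_triangle_ineq[of "b *\<^sub>R (axis 2 1::real^2)" "t *\<^sub>R axis 1 1"]
        by (simp add: norm_axis_real2 add_ac)
      also have "\<dots> < \<delta>1" using t na nb y by simp
      finally show "\<bar>d1 (x + b *\<^sub>R axis 2 1 + t *\<^sub>R axis 1 1) - d1 x\<bar> \<le> e / 2"
        using \<delta>1(2) by (simp add: dist_real_def less_imp_le)
    qed
    have T2: "\<bar>f (x + b *\<^sub>R axis 2 1) - f (x + 0 *\<^sub>R axis 2 1) - d2 x * b\<bar> \<le> e/2 * \<bar>b\<bar>"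
    proof (rule mvt_bound[where \<phi>'="\<lambda>t. d2 (x + t *\<^sub>R axis 2 1)"])
      show "((\<lambda>t. f (x + t *\<^sub>R axis 2 1)) has_real_derivative d2 (x + t *\<^sub>R axis 2 1)) (at t)" for t
        by (rule partial_shift[OF p2])
      fix t assume t: "\<bar>t\<bar> \<le> \<bar>b\<bar>"
      have "dist (x + t *\<^sub>R axis 2 1) x = \<bar>t\<bar>"
        unfolding dist_norm by (simp add: norm_axis_real2)
      also have "\<dots> < \<delta>2" using t nb y norm_ge_zero[of "y-x"] by (simp add: min_def split: if_splits)
      finally show "\<bar>d2 (x + t *\<^sub>R axis 2 1) - d2 x\<bar> \<le> e / 2"
        using \<delta>2(2) by (simp add: dist_real_def less_imp_le)
    qed
    have "f y - f x - (d1 x *\<^sub>R axis 1 1 + d2 x *\<^sub>R axis 2 1) \<bullet> (y - x)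
        = (f ((x + b *\<^sub>R axis 2 1) + a *\<^sub>R axis 1 1) - f ((x + b *\<^sub>R axis 2 1) + 0 *\<^sub>R axis 1 1) - d1 x * a)
        + (f (x + b *\<^sub>R axis 2 1) - f (x + 0 *\<^sub>R axis 2 1) - d2 x * b)"
      unfolding inner_D2 a_def[symmetric] b_def[symmetric] using yeq by simp
    then have "norm (f y - f x - (d1 x *\<^sub>R axis 1 1 + d2 x *\<^sub>R axis 2 1) \<bullet> (y - x)) \<le> e/2 * \<bar>a\<bar> + e/2 * \<bar>b\<bar>"
      using T1 T2 abs_triangle_ineq unfolding real_norm_def by (smt (verit))
    also have "\<dots> \<le> e * norm (y - x)"
    proof -
      have "e/2 * \<bar>a\<bar> \<le> e/2 * norm (y - x)" using na e by (intro mult_left_mono) auto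
      moreover have "e/2 * \<bar>b\<bar> \<le> e/2 * norm (y - x)" using nb e by (intro mult_left_mono) auto
      ultimately show ?thesis by linarith
    qed
    finally show "norm (f y - f x - (d1 x *\<^sub>R axis 1 1 + d2 x *\<^sub>R axis 2 1) \<bullet> (y - x)) \<le> e * norm (y - x)" .
  qed
qed

lemma grad_eq:
  assumes "smooth2 f"
  obtains D where "continuous_on UNIV D" "\<And>x. grad f x = D x"
proof -
  obtain S where S: "f \<in> S" "\<And>g. g \<in> S \<Longrightarrow> continuous_on UNIV g \<and>
      (\<forall>i::2. \<exists>h\<in>S. \<forall>x. ((\<lambda>t. g (x + t *\<^sub>R axis i 1)) has_real_derivative h x) (at 0))"
    using assms unfolding smooth2_def by blast
  obtain d1 where d1: "d1 \<in> S" "\<And>x. ((\<lambda>t. f (x + t *\<^sub>R axis 1 1)) has_real_derivative d1 x) (at 0)"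
    using S by blast
  obtain d2 where d2: "d2 \<in> S" "\<And>x. ((\<lambda>t. f (x + t *\<^sub>R axis 2 1)) has_real_derivative d2 x) (at 0)"
    using S by blast
  have c1: "continuous_on UNIV d1" and c2: "continuous_on UNIV d2" using S d1 d2 by auto
  define D where "D x = d1 x *\<^sub>R axis 1 1 + d2 x *\<^sub>R (axis 2 1 :: real^2)" for x
  have cD: "continuous_on UNIV D" unfolding D_def by (intro continuous_intros c1 c2)
  have "grad f x = D x" for x
  proof -
    have hd: "(f has_derivative (\<lambda>v. D x \<bullet> v)) (at x)"
      unfolding D_def by (rule partials_has_derivative[OF c1 c2 d1(2) d2(2)])
    have "(f has_derivative (\<lambda>v. grad f x \<bullet> v)) (at x)"
      unfolding grad_def by (rule someI[of _ "D x"]) (rule hd)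
    then have eq: "(\<lambda>v. grad f x \<bullet> v) = (\<lambda>v. D x \<bullet> v)"
      using hd has_derivative_unique by blast
    show ?thesis
    proof (subst vec_eq_iff, intro allI)
      fix i :: 2
      have "grad f x \<bullet> axis i 1 = D x \<bullet> axis i 1" using eq by metis
      then show "grad f x $ i = D x $ i" by (simp add: inner_axis)
    qed
  qed
  then show ?thesis using that cD by blast
qed

lemma cc_map:
  assumes "connected_component S a b" "continuous_on UNIV \<phi>" "\<phi> ` S \<subseteq> T"
  shows "connected_component T (\<phi> a) (\<phi> b)"
proof -
  obtain C where C: "connected C" "C \<subseteq> S" "a \<in> C" "b \<in> C"
    using assms(1) unfolding connected_component_def by blast
  have "connected (\<phi> ` C)"
    by (rule connected_continuous_image[OF continuous_on_subset[OF assms(2)] C(1)]) auto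
  moreover have "\<phi> ` C \<subseteq> T" using C(2) assms(3) by blast
  ultimately show ?thesis unfolding connected_component_def using C by blast
qed

lemma from_to_c [simp]: "from_c (to_c v) = v"
  by (simp add: from_c_def to_c_def vec_eq_iff forall_2)

lemma to_from_c [simp]: "to_c (from_c z) = z"
  by (simp add: from_c_def to_c_def complex_eq_iff)

lemma linear_to_c: "linear to_c"
  by (rule linearI) (simp_all add: to_c_def complex_eq_iff)

lemma linear_from_c: "linear from_c"
  by (rule linearI) (simp_all add: from_c_def vec_eq_iff forall_2)

lemma cont_to_c: "continuous_on UNIV to_c"
  using linear_to_c linear_continuous_on linear_conv_bounded_linear by blast

lemma cont_from_c: "continuous_on UNIV from_c"
  using linear_from_c linear_continuous_on linear_conv_bounded_linear by blast

lemma inj_to_c: "inj to_c"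
  by (metis from_to_c injI)

lemma inside_image:
  assumes "x \<notin> J" "bounded (connected_component_set (- J) x)"
  shows "to_c x \<in> inside (to_c ` J)"
proof -
  have "connected_component_set (- (to_c ` J)) (to_c x) \<subseteq> to_c ` connected_component_set (- J) x"
  proof
    fix z assume "z \<in> connected_component_set (- (to_c ` J)) (to_c x)"
    then have "connected_component (- (to_c ` J)) (to_c x) z" by simp
    moreover have "from_c ` (- (to_c ` J)) \<subseteq> - J"
      by (auto, metis image_eqI to_from_c)
    ultimately have "connected_component (- J) (from_c (to_c x)) (from_c z)"
      using cc_map cont_from_c by blast
    then have "from_c z \<in> connected_component_set (- J) x" by simp
    then show "z \<in> to_c ` connected_component_set (- J) x"
      by (metis image_eqI to_from_c)
  qed
  moreover have "bounded (to_c ` connected_component_set (- J) x)"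
    using assms(2) linear_to_c bounded_linear_image linear_conv_bounded_linear by blast
  ultimately have "bounded (connected_component_set (- (to_c ` J)) (to_c x))"
    using bounded_subset by blast
  moreover have "to_c x \<notin> to_c ` J" using assms(1) inj_to_c by (metis from_to_c imageE)
  ultimately show ?thesis unfolding inside_def by blast
qed

theorem theorem3:
  fixes f :: "real^2 \<Rightarrow> real" and \<delta> :: real and X :: "(real^2) set"
  assumes "morse2 f"
    and "\<delta> > 0"
    and "X \<in> components {p. norm (grad f p) \<le> \<delta>}"
    and "bounded X"
    and "simply_connected X"
    and "\<forall>p\<in>closure X. norm (grad f p) \<le> \<delta>"
    and "\<forall>p\<in>frontier X. norm (grad f p) = \<delta>"
    and "jordan_curve (frontier X)"
    and "degree_region f X \<noteq> 0"
  shows "\<exists>V :: real^2 \<Rightarrow> real^2. continuous_on (closure X) V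
           \<and> (\<forall>p\<in>closure X. norm (V p - grad f p) \<le> 2 * \<delta>)
           \<and> (\<forall>p\<in>frontier X. V p = grad f p)
           \<and> (\<exists>!p. p \<in> closure X \<and> V p = 0)"
proof -
  define J where "J = frontier X"
  have sm: "smooth2 f" using assms(1) unfolding morse2_def by blast
  obtain D where cD: "continuous_on UNIV D" and gD: "\<And>x. grad f x = D x"
    using grad_eq[OF sm] by blast
  have cg: "continuous_on UNIV (grad f)"
    using cD gD by (metis ext)
  obtain \<gamma> where \<gamma>: "simple_path \<gamma>" "pathfinish \<gamma> = pathstart \<gamma>" "path_image \<gamma> = J"
    using assms(8) unfolding jordan_curve_def J_def by blast
  have cJ: "compact J" using \<gamma> compact_simple_path_image by metis
  have Jne: "J \<noteq> {}" using \<gamma>(3) by (metis path_image_nonempty)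
  have "{p\<in>X. grad f p = 0} \<noteq> {}"
    using assms(9) unfolding degree_region_def by (metis sum.empty)
  then obtain p where pX: "p \<in> X" and gp: "grad f p = 0" by blast
  have pJ: "p \<notin> J" using assms(2,7) gp unfolding J_def by auto
  \<comment> \<open>the component of p is inside X, hence bounded\<close>
  have pbd: "bounded (connected_component_set (- J) p)"
  proof -
    let ?C = "connected_component_set (- J) p"
    have "?C \<subseteq> X"
    proof (rule ccontr)
      assume "\<not> ?C \<subseteq> X"
      then have "?C - X \<noteq> {}" by blast
      moreover have "?C \<inter> X \<noteq> {}" 
      proof -
        have "p \<in> ?C" using pJ by (simp add: connected_component_refl)
        then show ?thesis using pX by blast
      qed
      ultimately have "?C \<inter> frontier X \<noteq> {}"
        using connected_Int_frontier[OF connected_connected_component] by blast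
      then show False using connected_component_subset[of "- J" p] unfolding J_def by blast
    qed
    then show ?thesis using assms(4) bounded_subset by blast
  qed
  have dis: "C \<inter> {p} \<noteq> {}" if C: "C \<in> components (- J)" "bounded C" for C
  proof -
    obtain x where x: "x \<in> - J" "C = connected_component_set (- J) x"
      using C(1) unfolding components_iff by blast
    let ?c = "to_c \<circ> \<gamma>"
    have sp: "simple_path ?c"
      using \<gamma>(1) simple_path_linear_image_eq[OF linear_to_c inj_to_c] by blast
    have cl: "pathfinish ?c = pathstart ?c" using \<gamma>(2) by (simp add: pathfinish_compose pathstart_compose)
    have pic: "path_image ?c = to_c ` J" using \<gamma>(3) by (simp add: path_image_compose)
    have conn: "connected (inside (to_c ` J))"
      using Jordan_inside_outside[OF sp cl] pic by simp
    have xi: "to_c x \<in> inside (to_c ` J)" using inside_image x C(2) by auto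
    have pi: "to_c p \<in> inside (to_c ` J)" using inside_image pJ pbd by auto
    have "inside (to_c ` J) \<subseteq> - (to_c ` J)" using inside_no_overlap by blast
    then have "connected_component (- (to_c ` J)) (to_c x) (to_c p)"
      unfolding connected_component_def using conn xi pi by blast
    moreover have "from_c ` (- (to_c ` J)) \<subseteq> - J"
      by (auto, metis image_eqI to_from_c)
    ultimately have "connected_component (- J) (from_c (to_c x)) (from_c (to_c p))"
      using cc_map cont_from_c by blast
    then have "p \<in> C" using x by simp
    then show ?thesis by blast
  qed
  have fim: "grad f \<in> J \<rightarrow> sphere 0 \<delta>" using assms(7) unfolding J_def by auto
  obtain K g where K: "finite K" "K \<subseteq> {p}" "disjnt K J" and cgK: "continuous_on (- K) g"
      and gK: "g \<in> (- K) \<rightarrow> sphere 0 \<delta>" and gJ: "\<And>x. x \<in> J \<Longrightarrow> g x = grad f x"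
    using extend_map_UNIV_to_sphere_cofinite[of \<delta> J "grad f" 0 "{p}", OF _ _ cJ continuous_on_subset[OF cg] fim dis]
      assms(2) by auto
  define \<epsilon> where "\<epsilon> = infdist p J"
  have \<epsilon>: "\<epsilon> > 0" unfolding \<epsilon>_def using infdist_pos_not_in_closed cJ compact_imp_closed Jne pJ by blast
  define \<psi> where "\<psi> q = min 1 (dist q p / \<epsilon>)" for q
  define V where "V q = (if q = p then 0 else \<psi> q *\<^sub>R g q)" for q
  have gnorm: "norm (g q) = \<delta>" if "q \<noteq> p" for q
    using gK K(2) that by auto
  have psi1: "\<psi> q = 1" if "q \<in> J" for q
  proof -
    have "\<epsilon> \<le> dist q p" unfolding \<epsilon>_def using infdist_le[OF that, of p] by (simp add: dist_commute)
    then show ?thesis unfolding \<psi>_def using \<epsilon> by simp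
  qed
  have psi_pos: "\<psi> q > 0" if "q \<noteq> p" for q
    unfolding \<psi>_def using \<epsilon> that by simp
  have psi_le: "\<psi> q \<le> 1" for q unfolding \<psi>_def by simp
  have Vnorm: "norm (V q) \<le> \<delta>" for q
  proof (cases "q = p")
    case True then show ?thesis using assms(2) by (simp add: V_def)
  next
    case False
    then have "norm (V q) = \<psi> q * \<delta>" using psi_pos[OF False] gnorm[OF False] by (simp add: V_def)
    also have "\<dots> \<le> \<delta>" using psi_le[of q] assms(2) by (simp add: mult_left_le_one_le psi_pos[OF False] less_imp_le)
    finally show ?thesis .
  qed
  have contV: "isCont V q" for q
  proof (cases "q = p")
    case False
    have cpsi: "continuous_on UNIV \<psi>" unfolding \<psi>_def using \<epsilon> by (intro continuous_intros) auto
    have "continuous_on (- {p}) (\<lambda>q. \<psi> q *\<^sub>R g q)"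
      by (intro continuous_intros continuous_on_subset[OF cpsi] continuous_on_subset[OF cgK]) (use K(2) in auto)
    then have "continuous_on (- {p}) V"
      by (rule continuous_on_cong[THEN iffD1, rotated 2]) (auto simp: V_def)
    then show ?thesis using False continuous_on_eq_continuous_at[of "- {p}" V] by auto
  next
    case True
    show ?thesis unfolding continuous_at_eps_delta True
    proof (intro allI impI)
      fix e :: real assume e: "e > 0"
      show "\<exists>d>0. \<forall>x'. dist x' p < d \<longrightarrow> dist (V x') (V p) < e"
      proof (intro exI[of _ "e * \<epsilon> / \<delta>"] conjI allI impI)
        show "e * \<epsilon> / \<delta> > 0" using e \<epsilon> assms(2) by simp
        fix x' assume x': "dist x' p < e * \<epsilon> / \<delta>"
        show "dist (V x') (V p) < e"
        proof (cases "x' = p")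
          case True then show ?thesis using e by (simp add: V_def)
        next
          case False
          have "dist (V x') (V p) = \<psi> x' * \<delta>"
            using psi_pos[OF False] gnorm[OF False] False by (simp add: V_def dist_norm)
          also have "\<dots> \<le> dist x' p / \<epsilon> * \<delta>"
            unfolding \<psi>_def using assms(2) by (intro mult_right_mono) auto
          also have "\<dots> < e * \<epsilon> / \<delta> / \<epsilon> * \<delta>"
            using x' \<epsilon> assms(2) by (intro mult_strict_right_mono divide_strict_right_mono) auto
          also have "\<dots> = e" using \<epsilon> assms(2) by simp
          finally show ?thesis .
        qed
      qed
    qed
  qed
  have pcl: "p \<in> closure X" using pX closure_subset by blast
  show ?thesis
  proof (intro exI[of _ V] conjI ballI)
    show "continuous_on (closure X) V" using contV continuous_at_imp_continuous_on by blast
  next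
    fix q assume q: "q \<in> closure X"
    have "norm (V q - grad f q) \<le> norm (V q) + norm (grad f q)" by (rule norm_triangle_ineq4)
    also have "\<dots> \<le> 2 * \<delta>" using Vnorm[of q] assms(6) q by auto
    finally show "norm (V q - grad f q) \<le> 2 * \<delta>" .
  next
    fix q assume q: "q \<in> frontier X"
    then have "q \<in> J" "q \<noteq> p" using pJ unfolding J_def by auto
    then show "V q = grad f q" using psi1 gJ by (simp add: V_def)
  next
    show "\<exists>!q. q \<in> closure X \<and> V q = 0"
    proof (rule ex1I[of _ p])
      show "p \<in> closure X \<and> V p = 0" using pcl by (simp add: V_def)
    next
      fix q assume q: "q \<in> closure X \<and> V q = 0"
      show "q = p"
      proof (rule ccontr)
        assume "q \<noteq> p"
        then have "norm (V q) = \<psi> q * \<delta>" using psi_pos gnorm by (simp add: V_def less_imp_le)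
        moreover have "\<psi> q * \<delta> > 0" using psi_pos[OF \<open>q \<noteq> p\<close>] assms(2) by simp
        ultimately show False using q by (metis norm_zero less_irrefl)
      qed
    qed
  qed
qed

end
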